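(* Let $(Y,d)$ be a metric space and let $k:Y\times Y\to[0,+\infty)$ be a positive, symmetric, bounded kernel such that $\{k(\cdot,y):y\in Y\}$ is uniformly equicontinuous on $(Y,d)$. Let $\mu$ be a regular Borel probability measure on $Y$ and $\varepsilon>0$. Then there exist $m\in\mathbb{N}$ and points $x_1,\dots,x_m\in Y$ such that the measure $\nu:=\frac1m\sum_{j=1}^m\delta_{x_j}$ satisfies $\sup_{x\in Y}|U^\mu(x)-U^\nu(x)|\le\varepsilon$.
   Context: For a measure $\sigma$ on $Y$ the potential is $U^\sigma(x)=\int_Y k(x,y)\,d\sigma(y)$; $\delta_x$ denotes the Dirac measure at $x$. *)

theory Defs
  imports "HOL-Probability.Probability"
begin

definition regular_borel_measure :: "'a::metric_space measure \<Rightarrow> bool" where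
  "regular_borel_measure M \<longleftrightarrow> sets M = sets borel \<and>
     (\<forall>A \<in> sets borel.
        emeasure M A = (INF U \<in> {U. open U \<and> A \<subseteq> U}. emeasure M U) \<and>
        emeasure M A = (SUP K \<in> {K. compact K \<and> K \<subseteq> A}. emeasure M K))"

definition potential :: "('a \<Rightarrow> 'a \<Rightarrow> real) \<Rightarrow> 'a measure \<Rightarrow> 'a \<Rightarrow> real" where
  "potential k \<sigma> x = (\<integral>y. k x y \<partial>\<sigma>)"

text \<open>Empirical measure (1/m) sum_{j<m} delta_{xs j}.\<close>
definition empirical :: "nat \<Rightarrow> (nat \<Rightarrow> 'a) \<Rightarrow> 'a measure" where
  "empirical m xs = measure_pmf (pmf_of_multiset (mset (map xs [0..<m])))"

end

theory Submission
  imports Defs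
begin

lemma sum_list_count_real:
  fixes g :: "'a \<Rightarrow> real"
  shows "sum_list (map g L) = (\<Sum>a\<in>set L. real (count_list L a) * g a)"
proof (induction L)
  case (Cons x xs)
  have fin: "finite (set xs)" by simp
  show ?case
  proof (cases "x \<in> set xs")
    case True
    have "(\<Sum>a\<in>set (x # xs). real (count_list (x # xs) a) * g a)
        = (\<Sum>a\<in>set xs. real (count_list xs a) * g a + (if a = x then g a else 0))"
      using True by (intro sum.cong) (auto simp: insert_absorb algebra_simps)
    also have "\<dots> = sum_list (map g xs) + g x"
      using True by (simp add: sum.distrib Cons.IH)
    finally show ?thesis by simp
  next
    case False
    have "(\<Sum>a\<in>set xs. real (count_list (x # xs) a) * g a) = (\<Sum>a\<in>set xs. real (count_list xs a) * g a)"
      using False by (intro sum.cong) auto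
    then show ?thesis using False by (simp add: Cons.IH)
  qed
qed simp

lemma empirical_integral:
  fixes L :: "'a list" and g :: "'a \<Rightarrow> real"
  assumes "L \<noteq> []"
  shows "(\<integral>y. g y \<partial>empirical (length L) ((!) L)) = sum_list (map g L) / length L"
proof -
  have e: "map ((!) L) [0..<length L] = L" by (simp add: map_nth)
  have ne: "mset L \<noteq> {#}" using assms by simp
  have "(\<integral>y. g y \<partial>measure_pmf (pmf_of_multiset (mset L))) = (\<Sum>a\<in>set L. g a * pmf (pmf_of_multiset (mset L)) a)"
    by (rule integral_measure_pmf_real) (use ne in auto)
  also have "\<dots> = (\<Sum>a\<in>set L. count_list L a * g a) / length L"
    using ne by (simp add: sum_divide_distrib count_mset mult.commute)
  also have "\<dots> = sum_list (map g L) / length L"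
    by (simp add: sum_list_count_real)
  finally show ?thesis unfolding empirical_def e .
qed

lemma rat_approx:
  fixes p :: "nat \<Rightarrow> real" and h :: "'b \<Rightarrow> nat \<Rightarrow> real"
  assumes p0: "\<And>i. p i \<ge> 0" and p1: "(\<Sum>i<N. p i) = 1"
    and h0: "\<And>x i. 0 \<le> h x i" and hB: "\<And>x i. h x i \<le> B" and e: "e > 0"
  shows "\<exists>q :: nat \<Rightarrow> nat. (\<Sum>i<N. q i) \<ge> (1::nat) \<and>
     (\<forall>x. \<bar>(\<Sum>i<N. p i * h x i) - (\<Sum>i<N. real (q i) * h x i) / real (\<Sum>i<N. q i)\<bar> \<le> e)"
proof -
  have B0: "B \<ge> 0" using h0 hB order_trans by blast
  define T :: nat where "T = N + nat \<lceil>N * B / e\<rceil> + 1"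
  have T: "real T \<ge> N + N * B / e + 1" unfolding T_def by linarith
  define q where "q i = nat \<lfloor>T * p i\<rfloor>" for i
  have qu: "real (q i) \<le> T * p i" for i unfolding q_def using p0[of i] by simp
  have ql: "real (q i) > T * p i - 1" for i unfolding q_def using p0[of i] by linarith
  define m where "m = (\<Sum>i<N. q i)"
  have mr: "real m = (\<Sum>i<N. real (q i))" unfolding m_def by simp
  have mu: "real m \<le> T"
  proof -
    have "real m \<le> (\<Sum>i<N. T * p i)" unfolding mr by (rule sum_mono) (use qu in auto)
    also have "\<dots> = T" using p1 by (simp add: sum_distrib_left[symmetric])
    finally show ?thesis .
  qed
  have ml: "real m > real T - real N" if "N > 0"
  proof -
    have "(\<Sum>i<N. T * p i - 1) < real m" unfolding mr by (rule sum_strict_mono) (use that ql in auto)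
    also have "(\<Sum>i<N. T * p i - 1) = real T - real N" using p1 by (simp add: sum_subtractf sum_distrib_left[symmetric])
    finally show ?thesis by simp
  qed
  have N0: "N > 0" using p1 by (cases N) auto
  have mbig: "real m > N * B / e" using ml[OF N0] T by linarith
  have NBe: "N * B / e \<ge> 0" using B0 e by simp
  have mpos: "real m > 0" using mbig NBe by linarith
  have m1: "m \<ge> 1" using mpos by simp
  have NBm: "N * B / m \<le> e" using mbig e mpos by (simp add: field_simps)
  have main: "\<bar>(\<Sum>i<N. p i * h x i) - (\<Sum>i<N. q i * h x i) / m\<bar> \<le> e" for x
  proof -
    define S where "S = (\<Sum>i<N. p i * h x i)"
    define W where "W = (\<Sum>i<N. q i * h x i)"
    have S0: "S \<ge> 0" unfolding S_def by (rule sum_nonneg) (simp add: p0 h0)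
    have SB: "S \<le> B"
    proof -
      have "S \<le> (\<Sum>i<N. p i * B)" unfolding S_def by (rule sum_mono) (simp add: p0 hB mult_left_mono)
      also have "\<dots> = B" using p1 by (simp add: sum_distrib_right[symmetric])
      finally show ?thesis .
    qed
    have Wu: "W \<le> T * S"
    proof -
      have "W \<le> (\<Sum>i<N. T * p i * h x i)" unfolding W_def by (rule sum_mono) (simp add: qu h0 mult_right_mono)
      also have "\<dots> = T * S" unfolding S_def by (simp add: sum_distrib_left mult.assoc)
      finally show ?thesis .
    qed
    have Wl: "W \<ge> T * S - N * B"
    proof -
      have "(\<Sum>i<N. T * p i * h x i - B) \<le> W" unfolding W_def
      proof (rule sum_mono)
        fix i assume "i \<in> {..<N}"
        have "(T * p i - 1) * h x i \<le> q i * h x i" using ql[of i] h0[of x i] by (simp add: mult_right_mono)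
        then show "T * p i * h x i - B \<le> q i * h x i" using hB[of x i] by (simp add: algebra_simps)
      qed
      also have "(\<Sum>i<N. T * p i * h x i - B) = T * S - N * B" unfolding S_def
        by (simp add: sum_subtractf sum_distrib_left mult.assoc)
      finally show ?thesis .
    qed
    have up: "W / m - S \<le> e"
    proof -
      have "W / m - S \<le> T * S / m - S" using Wu mpos by (simp add: divide_right_mono)
      also have "\<dots> = S * (real T - real m) / m" using mpos by (simp add: field_simps)
      also have "\<dots> \<le> B * N / m"
        using S0 SB ml[OF N0] mu mpos by (intro divide_right_mono mult_mono) auto
      finally show ?thesis using NBm by (simp add: mult.commute)
    qed
    have lo: "S - W / m \<le> e"
    proof -
      have "S - W / m \<le> S - (T * S - N * B) / m" using Wl mpos by (simp add: divide_right_mono)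
      also have "\<dots> = (S * (real m - real T) + N * B) / m" using mpos by (simp add: field_simps)
      also have "\<dots> \<le> N * B / m" using S0 mu mpos
        by (intro divide_right_mono) (auto simp: mult_nonneg_nonpos)
      finally show ?thesis using NBm by simp
    qed
    show ?thesis using up lo unfolding S_def W_def by linarith
  qed
  show ?thesis using m1 main unfolding m_def by (intro exI[of _ q]) auto
qed

lemma discretize:
  fixes k :: "'a::metric_space \<Rightarrow> 'a \<Rightarrow> real" and M :: "'a measure"
  assumes prob: "prob_space M" and reg: "regular_borel_measure M"
    and k0: "\<And>x y. 0 \<le> k x y" and kB: "\<And>x y. k x y \<le> B"
    and uc: "\<And>e. e > 0 \<Longrightarrow> \<exists>\<delta>>0. \<forall>x y y'. dist y y' < \<delta> \<longrightarrow> \<bar>k x y - k x y'\<bar> < e"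
    and e: "e > 0"
  shows "\<exists>N (c::nat \<Rightarrow> 'a) p. (\<forall>i. p i \<ge> 0) \<and> (\<Sum>i<N. p i) = 1 \<and>
           (\<forall>x. \<bar>(\<integral>y. k x y \<partial>M) - (\<Sum>i<N. p i * k x (c i))\<bar> \<le> e)"
proof -
  interpret P: prob_space M by (rule prob)
  have B0: "B \<ge> 0" using k0 kB order_trans by blast
  have setsM: "sets M = sets borel" using reg unfolding regular_borel_measure_def by blast
  have spM: "space M = UNIV" using sets_eq_imp_space_eq[OF setsM] by simp
  obtain \<delta> where d0: "\<delta> > 0" and dk: "\<And>x y y'. dist y y' < \<delta> \<Longrightarrow> \<bar>k x y - k x y'\<bar> < e / 2"
    using uc[of "e/2"] e by auto
  define \<eta> where "\<eta> = e / (2 * (B + 1))"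
  have eta0: "\<eta> > 0" unfolding \<eta>_def using e B0 by simp
  have Beta: "B * \<eta> \<le> e / 2"
  proof -
    have "B * \<eta> = (e/2) * (B / (B + 1))" unfolding \<eta>_def using B0 by (simp add: field_simps)
    also have "\<dots> \<le> (e/2) * 1" using B0 e by (intro mult_left_mono) auto
    finally show ?thesis by simp
  qed
  have cont: "continuous_on UNIV (k x)" for x
  proof -
    have "uniformly_continuous_on UNIV (k x)"
      unfolding uniformly_continuous_on_def dist_real_def
    proof (intro allI impI)
      fix \<epsilon> :: real assume "\<epsilon> > 0"
      then obtain d where "d > 0" "\<And>x y y'. dist y y' < d \<Longrightarrow> \<bar>k x y - k x y'\<bar> < \<epsilon>" using uc by blast
      then show "\<exists>d>0. \<forall>xa\<in>UNIV. \<forall>x'\<in>UNIV. dist x' xa < d \<longrightarrow> \<bar>k x x' - k x xa\<bar> < \<epsilon>" by blast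
    qed
    then show ?thesis by (rule uniformly_continuous_imp_continuous)
  qed
  have kmeas: "k x \<in> borel_measurable M" for x
    using borel_measurable_continuous_onI[OF cont[of x]] measurable_cong_sets[OF setsM refl] by blast
  have kint: "integrable M (k x)" for x
    by (rule P.integrable_const_bound[where B=B]) (use k0 kB kmeas in auto)
  have "emeasure M UNIV = (SUP K \<in> {K. compact K \<and> K \<subseteq> UNIV}. emeasure M K)"
  proof -
    have "\<forall>A\<in>sets borel. emeasure M A = (SUP K \<in> {K. compact K \<and> K \<subseteq> A}. emeasure M K)"
      using reg unfolding regular_borel_measure_def by blast
    then show ?thesis by (metis sets.top space_borel)
  qed
  moreover have "emeasure M UNIV = 1" using P.emeasure_space_1 spM by simp
  ultimately have "ennreal (1 - \<eta>) < (SUP K \<in> {K. compact K \<and> K \<subseteq> UNIV}. emeasure M K)"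
    using eta0 by (simp add: ennreal_lessI)
  then obtain K where Kc: "compact K" and KM: "ennreal (1 - \<eta>) < emeasure M K"
    by (auto simp: less_SUP_iff)
  have Ks: "K \<in> sets M" using Kc setsM by (simp add: compact_imp_closed borel_closed)
  have Kcs: "- K \<in> sets M" using sets.compl_sets[OF Ks] spM by (simp add: Compl_eq_Diff_UNIV)
  have "1 - \<eta> < measure M K"
  proof (cases "1 - \<eta> \<ge> 0")
    case True
    then show ?thesis using KM by (simp add: P.emeasure_eq_measure ennreal_less_iff)
  next
    case False
    then show ?thesis using measure_nonneg[of M K] by linarith
  qed
  then have mK: "measure M (- K) \<le> \<eta>"
    using P.prob_compl[OF Ks] spM by (simp add: Compl_eq_Diff_UNIV)
  obtain C where CK: "C \<subseteq> K" and Cf: "finite C" and Ccov: "K \<subseteq> (\<Union>c\<in>C. ball c \<delta>)"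
  proof -
    have "K \<subseteq> (\<Union>c\<in>K. ball c \<delta>)" using d0 by auto
    then show ?thesis using compactE_image[OF Kc, of K "\<lambda>c. ball c \<delta>"] that by auto
  qed
  obtain cs where cs: "set cs = C" using finite_list[OF Cf] by blast
  define n where "n = length cs"
  define Q where "Q i y \<longleftrightarrow> (i < n \<and> y \<in> K \<and> dist y (cs ! i) < \<delta>) \<or> i = n" for i y
  define idx where "idx y = (LEAST i. Q i y)" for y
  define c where "c i = (if i < n then cs ! i else undefined)" for i
  define N where "N = Suc n"
  define E where "E i = idx -` {i}" for i
  have Qmeas: "(\<lambda>y. Q i y) \<in> measurable M (count_space UNIV)" for i
  proof -
    have [measurable]: "K \<in> sets M" by (rule Ks)
    have [measurable]: "(\<lambda>y. dist y (cs ! i)) \<in> borel_measurable M"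
      using borel_measurable_continuous_onI[OF continuous_on_dist[OF continuous_on_id continuous_on_const]]
        measurable_cong_sets[OF setsM refl] by auto
    show ?thesis unfolding Q_def by measurable
  qed
  have idxm: "idx \<in> measurable M (count_space UNIV)"
    unfolding idx_def by (rule measurable_Least) (rule Qmeas)
  have Es: "E i \<in> sets M" for i
    using measurable_sets[OF idxm, of "{i}"] spM unfolding E_def by simp
  have idxle: "idx y \<le> n" for y unfolding idx_def by (rule Least_le) (simp add: Q_def)
  have indsum: "(\<Sum>i<N. indicator (E i) y * f i) = f (idx y)" for y and f :: "nat \<Rightarrow> real"
  proof -
    have "(\<Sum>i<N. indicator (E i) y * f i) = (\<Sum>i<N. if i = idx y then f i else 0)"
      by (intro sum.cong) (auto simp: E_def)
    also have "\<dots> = f (idx y)" using idxle[of y] by (simp add: N_def)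
    finally show ?thesis .
  qed
  have indint: "integrable M (indicat_real (E i))" for i
    by (rule integrable_real_indicator) (simp_all add: Es P.emeasure_eq_measure)
  define p where "p i = measure M (E i)" for i
  have intsum: "(\<integral>y. f (idx y) \<partial>M) = (\<Sum>i<N. p i * f i)" for f :: "nat \<Rightarrow> real"
  proof -
    have "(\<integral>y. f (idx y) \<partial>M) = (\<integral>y. (\<Sum>i<N. indicator (E i) y * f i) \<partial>M)"
      by (simp add: indsum)
    also have "\<dots> = (\<Sum>i<N. (\<integral>y. indicator (E i) y * f i \<partial>M))"
      by (rule Bochner_Integration.integral_sum) (auto intro!: integrable_mult_left simp: Es indint)
    also have "\<dots> = (\<Sum>i<N. p i * f i)"
      by (intro sum.cong refl) (simp add: p_def spM)
    finally show ?thesis .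
  qed
  have gint: "integrable M (\<lambda>y. f (idx y))" for f :: "nat \<Rightarrow> real"
  proof -
    have "integrable M (\<lambda>y. (\<Sum>i<N. indicator (E i) y * f i))"
      by (intro Bochner_Integration.integrable_sum integrable_mult_left indint)
    then show ?thesis by (simp add: indsum)
  qed
  have p0: "\<forall>i. p i \<ge> 0" by (simp add: p_def)
  have p1: "(\<Sum>i<N. p i) = 1"
    using intsum[of "\<lambda>_. 1"] P.prob_space by (simp add: spM)
  have pw: "\<bar>k x y - k x (c (idx y))\<bar> \<le> e / 2 + B * indicator (- K) y" for x y
  proof (cases "y \<in> K")
    case True
    then obtain c0 where "c0 \<in> C" "dist y c0 < \<delta>" using Ccov by (auto simp: dist_commute)
    then obtain i where i: "i < n" "dist y (cs ! i) < \<delta>" using cs by (auto simp: in_set_conv_nth n_def)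
    have Qi: "Q i y" using i True by (simp add: Q_def)
    have "idx y \<le> i" unfolding idx_def by (rule Least_le) (rule Qi)
    moreover have "Q (idx y) y" unfolding idx_def by (rule LeastI) (rule Qi)
    ultimately have "idx y < n" "dist y (cs ! idx y) < \<delta>" using i by (auto simp: Q_def)
    then have "\<bar>k x y - k x (c (idx y))\<bar> < e / 2" using dk by (simp add: c_def)
    then show ?thesis using True by simp
  next
    case False
    have "\<bar>k x y - k x (c (idx y))\<bar> \<le> B" using k0 kB by (smt (verit))
    then show ?thesis using False e by simp
  qed
  have main: "\<bar>(\<integral>y. k x y \<partial>M) - (\<Sum>i<N. p i * k x (c i))\<bar> \<le> e" for x
  proof -
    have "(\<integral>y. k x y \<partial>M) - (\<Sum>i<N. p i * k x (c i)) = (\<integral>y. k x y - k x (c (idx y)) \<partial>M)"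
      using intsum[of "\<lambda>i. k x (c i)"] Bochner_Integration.integral_diff[OF kint[of x] gint[of "\<lambda>i. k x (c i)"]] by simp
    also have "\<bar>\<dots>\<bar> \<le> (\<integral>y. e / 2 + B * indicator (- K) y \<partial>M)"
    proof -
      have i1: "integrable M (\<lambda>y. k x y - k x (c (idx y)))"
        by (intro Bochner_Integration.integrable_diff kint gint)
      have i2: "integrable M (\<lambda>y. e / 2 + B * indicator (- K) y)"
        using Ks by (intro Bochner_Integration.integrable_add integrable_mult_right integrable_real_indicator)
           (simp_all add: P.emeasure_eq_measure Kcs)
      have "\<bar>(\<integral>y. k x y - k x (c (idx y)) \<partial>M)\<bar> \<le> (\<integral>y. \<bar>k x y - k x (c (idx y))\<bar> \<partial>M)"
        by (rule integral_abs_bound)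
      also have "\<dots> \<le> (\<integral>y. e / 2 + B * indicator (- K) y \<partial>M)"
        by (rule integral_mono) (use i1 i2 pw in auto)
      finally show ?thesis .
    qed
    also have "\<dots> = e / 2 + B * measure M (- K)"
    proof -
      have ii: "integrable M (indicat_real (- K))"
        by (rule integrable_real_indicator) (simp_all add: P.emeasure_eq_measure Kcs)
      show ?thesis
        using Kcs spM P.prob_space ii by (subst Bochner_Integration.integral_add) auto
    qed
    also have "\<dots> \<le> e / 2 + B * \<eta>" using mK B0 by (simp add: mult_left_mono)
    also have "\<dots> \<le> e" using Beta by simp
    finally show ?thesis .
  qed
  show ?thesis using p0 p1 main by blast
qed

lemma concat_rep:
  fixes g :: "'a \<Rightarrow> real"
  shows "length (concat (map (\<lambda>i. replicate (q i) (c i)) [0..<N])) = (\<Sum>i<N. q i)"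
    and "sum_list (map g (concat (map (\<lambda>i. replicate (q i) (c i)) [0..<N]))) = (\<Sum>i<N. real (q i) * g (c i))"
  by (induction N) (auto simp: sum_list_replicate)

theorem lemma3p3:
  fixes k :: "'a::metric_space \<Rightarrow> 'a \<Rightarrow> real"
    and M :: "'a measure"
    and \<epsilon> :: real
  assumes nonneg: "\<And>x y. k x y \<ge> 0"
    and symm: "\<And>x y. k x y = k y x"
    and bdd: "\<exists>B. \<forall>x y. k x y \<le> B"
    and equicont: "\<And>e. e > 0 \<Longrightarrow> \<exists>\<delta>>0. \<forall>y x x'. dist x x' < \<delta> \<longrightarrow> \<bar>k x y - k x' y\<bar> < e"
    and prob: "prob_space M"
    and reg: "regular_borel_measure M"
    and eps: "\<epsilon> > 0"
  shows "\<exists>m::nat. m \<ge> 1 \<and> (\<exists>xs :: nat \<Rightarrow> 'a.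
           \<forall>x. \<bar>potential k M x - potential k (empirical m xs) x\<bar> \<le> \<epsilon>)"
proof -
  obtain B where kB: "\<And>x y. k x y \<le> B" using bdd by blast
  have uc: "\<exists>\<delta>>0. \<forall>x y y'. dist y y' < \<delta> \<longrightarrow> \<bar>k x y - k x y'\<bar> < e" if e0: "e > 0" for e
  proof -
    obtain \<delta> where d0: "\<delta> > 0" and H: "\<forall>y x x'. dist x x' < \<delta> \<longrightarrow> \<bar>k x y - k x' y\<bar> < e"
      using equicont[OF e0] by blast
    have eq: "\<bar>k x y - k x y'\<bar> = \<bar>k y x - k y' x\<bar>" for x y y' :: 'a
      by (simp only: symm[of x y] symm[of x y'])
    show ?thesis
    proof (intro exI[of _ \<delta>] conjI allI impI)
      show "\<delta> > 0" by (rule d0)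
      fix x y y' :: 'a assume "dist y y' < \<delta>"
      then have "\<bar>k y x - k y' x\<bar> < e" using H by blast
      then show "\<bar>k x y - k x y'\<bar> < e" using eq[of x y y'] by linarith
    qed
  qed
  have e2: "\<epsilon> / 2 > 0" using eps by simp
  have ex1: "\<exists>N (c::nat \<Rightarrow> 'a) p. (\<forall>i. p i \<ge> 0) \<and> (\<Sum>i<N. p i) = 1 \<and>
           (\<forall>x. \<bar>(\<integral>y. k x y \<partial>M) - (\<Sum>i<N. p i * k x (c i))\<bar> \<le> \<epsilon> / 2)"
    by (rule discretize[OF prob reg nonneg kB uc e2])
  then obtain N :: nat and c :: "nat \<Rightarrow> 'a" and p :: "nat \<Rightarrow> real" where p0: "\<forall>i. p i \<ge> 0" and p1: "(\<Sum>i<N. p i) = 1"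
    and app1: "\<forall>x. \<bar>(\<integral>y. k x y \<partial>M) - (\<Sum>i<N. p i * k x (c i))\<bar> \<le> \<epsilon> / 2"
    by (elim exE conjE) (rule that; assumption)
  have ex2: "\<exists>q :: nat \<Rightarrow> nat. (\<Sum>i<N. q i) \<ge> (1::nat) \<and>
     (\<forall>x. \<bar>(\<Sum>i<N. p i * k x (c i)) - (\<Sum>i<N. real (q i) * k x (c i)) / real (\<Sum>i<N. q i)\<bar> \<le> \<epsilon> / 2)"
    by (rule rat_approx[of p N "\<lambda>x i. k x (c i)" B "\<epsilon> / 2", OF spec[OF p0] p1 nonneg kB e2])
  then obtain q where q1: "(\<Sum>i<N. q i) \<ge> (1::nat)"
    and app2: "\<forall>x. \<bar>(\<Sum>i<N. p i * k x (c i)) - (\<Sum>i<N. real (q i) * k x (c i)) / real (\<Sum>i<N. q i)\<bar> \<le> \<epsilon> / 2"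
    by (elim exE conjE) (rule that; assumption)
  define L where "L = concat (map (\<lambda>i. replicate (q i) (c i)) [0..<N])"
  have lenL: "length L = (\<Sum>i<N. q i)" unfolding L_def by (rule concat_rep(1))
  have sumL: "sum_list (map (k x) L) = (\<Sum>i<N. real (q i) * k x (c i))" for x
    unfolding L_def by (rule concat_rep(2))
  have Lne: "L \<noteq> []" using lenL q1 by auto
  show ?thesis
  proof (intro exI conjI allI)
    show "length L \<ge> 1" using lenL q1 by simp
    fix x
    have "potential k (empirical (length L) ((!) L)) x = (\<Sum>i<N. real (q i) * k x (c i)) / real (\<Sum>i<N. q i)"
      unfolding potential_def using empirical_integral[OF Lne, of "k x"] sumL lenL by simp
    moreover have "\<bar>(\<integral>y. k x y \<partial>M) - (\<Sum>i<N. p i * k x (c i))\<bar> \<le> \<epsilon> / 2"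
      using app1 by blast
    moreover have "\<bar>(\<Sum>i<N. p i * k x (c i)) - (\<Sum>i<N. real (q i) * k x (c i)) / real (\<Sum>i<N. q i)\<bar> \<le> \<epsilon> / 2"
      using app2 by blast
    ultimately show "\<bar>potential k M x - potential k (empirical (length L) ((!) L)) x\<bar> \<le> \<epsilon>"
      unfolding potential_def by linarith
  qed
qed
end
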